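(* Let $\mathcal{K}$ be a simplicial complex of dimension at most $2$ with non-negatively weighted edges, let $g=\operatorname{rank}\mathsf{H}_1(\mathcal{K})$ and $L=\operatorname{rank}\mathsf{Z}_1(\mathcal{K})$. Let $\mathcal{G}'$ be a set of $1$-cycles such that there exists a minimal cycle basis $\Gamma^*=\{\gamma^*_1,\dots,\gamma^*_L\}$ of the $1$-skeleton of $\mathcal{K}$ with the property that for each $1\le i\le L$ there is a subset $\Gamma_i\subseteq\mathcal{G}'$ with $\gamma^*_i=\sum_{\gamma\in\Gamma_i}\gamma$ and $\mathcal{S}(\gamma)\le 2\mathcal{S}(\gamma^*_i)$ for every $\gamma\in\Gamma_i$. Then there exists a minimal homology basis $\mathcal{C}^*=\{C^*_1,\dots,C^*_g\}$ of $\mathsf{H}_1(\mathcal{K})$ such that $\mathcal{G}'$ contains $g$ cycles $A_1,\dots,A_g$ with (i) $[A_1],\dots,[A_g]$ forming a homology basis, and (ii) $\mathcal{S}(A_i)\le 2\mathcal{S}(C^*_i)$ for $i=1,\dots,g$.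
   Context: All chains, cycles and homology are over $\mathbb{Z}_2$; sums of cycles are $\mathbb{Z}_2$-sums of edge sets. The size $\mathcal{S}(C)$ of a $1$-cycle is the total weight of its edges. A cycle basis of the $1$-skeleton is a set of $L$ cycles forming a basis of the cycle space $\mathsf{Z}_1$; it is minimal if its total size is smallest among all cycle bases. A homology basis is a set of $g$ cycles whose classes form a basis of $\mathsf{H}_1(\mathcal{K})$; it is minimal if its total size is smallest among all homology bases. *)

theory Defs
  imports Complex_Main
begin

definition simplicial_complex2 :: "'v set set \<Rightarrow> bool" where
  "simplicial_complex2 K \<longleftrightarrow> finite K \<and>
     (\<forall>s\<in>K. s \<noteq> {} \<and> finite s \<and> card s \<le> 3) \<and>
     (\<forall>s\<in>K. \<forall>t. t \<subseteq> s \<and> t \<noteq> {} \<longrightarrow> t \<in> K)"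

definition edges :: "'v set set \<Rightarrow> 'v set set" where
  "edges K = {s\<in>K. card s = 2}"

definition triangles :: "'v set set \<Rightarrow> 'v set set" where
  "triangles K = {s\<in>K. card s = 3}"

text \<open>Z2-sum of an indexed family of chains (chains = sets of edges):
  an edge is in the sum iff it lies in an odd number of the summands.\<close>
definition zsum :: "('i \<Rightarrow> 'a set) \<Rightarrow> 'i set \<Rightarrow> 'a set" where
  "zsum f I = {e. odd (card {i\<in>I. e \<in> f i})}"

definition symdiff :: "'a set \<Rightarrow> 'a set \<Rightarrow> 'a set" where
  "symdiff A B = (A - B) \<union> (B - A)"

definition cycles :: "'v set set \<Rightarrow> 'v set set set" where
  "cycles K = {C. C \<subseteq> edges K \<and> (\<forall>v. even (card {e\<in>C. v \<in> e}))}"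

definition tri_boundary :: "'v set \<Rightarrow> 'v set set" where
  "tri_boundary t = {e. e \<subseteq> t \<and> card e = 2}"

definition boundaries :: "'v set set \<Rightarrow> 'v set set set" where
  "boundaries K = {zsum tri_boundary T | T. T \<subseteq> triangles K}"

definition csize :: "('v set \<Rightarrow> real) \<Rightarrow> 'v set set \<Rightarrow> real" where
  "csize w C = (\<Sum>e\<in>C. w e)"

definition cycle_basis :: "'v set set \<Rightarrow> 'v set set list \<Rightarrow> bool" where
  "cycle_basis K bs \<longleftrightarrow> set bs \<subseteq> cycles K \<and>
     (\<forall>I\<subseteq>{..<length bs}. I \<noteq> {} \<longrightarrow> zsum ((!) bs) I \<noteq> {}) \<and>
     (\<forall>z\<in>cycles K. \<exists>I\<subseteq>{..<length bs}. zsum ((!) bs) I = z)"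

definition min_cycle_basis :: "'v set set \<Rightarrow> ('v set \<Rightarrow> real) \<Rightarrow> 'v set set list \<Rightarrow> bool" where
  "min_cycle_basis K w bs \<longleftrightarrow> cycle_basis K bs \<and>
     (\<forall>bs'. cycle_basis K bs' \<longrightarrow> (\<Sum>C\<leftarrow>bs. csize w C) \<le> (\<Sum>C\<leftarrow>bs'. csize w C))"

definition homology_basis :: "'v set set \<Rightarrow> 'v set set list \<Rightarrow> bool" where
  "homology_basis K bs \<longleftrightarrow> set bs \<subseteq> cycles K \<and>
     (\<forall>I\<subseteq>{..<length bs}. I \<noteq> {} \<longrightarrow> zsum ((!) bs) I \<notin> boundaries K) \<and>
     (\<forall>z\<in>cycles K. \<exists>I\<subseteq>{..<length bs}. symdiff z (zsum ((!) bs) I) \<in> boundaries K)"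

definition min_homology_basis :: "'v set set \<Rightarrow> ('v set \<Rightarrow> real) \<Rightarrow> 'v set set list \<Rightarrow> bool" where
  "min_homology_basis K w bs \<longleftrightarrow> homology_basis K bs \<and>
     (\<forall>bs'. homology_basis K bs' \<longrightarrow> (\<Sum>C\<leftarrow>bs. csize w C) \<le> (\<Sum>C\<leftarrow>bs'. csize w C))"

end

theory Submission
  imports Defs "HOL-Library.Z2" "HOL-Library.Function_Algebras"
begin

definition chi :: "'a set \<Rightarrow> 'a \<Rightarrow> bit" where "chi A = (\<lambda>e. if e \<in> A then 1 else 0)"

definition bscale :: "bit \<Rightarrow> ('a \<Rightarrow> bit) \<Rightarrow> ('a \<Rightarrow> bit)" where
  "bscale c f = (if c = 1 then f else 0)"

interpretation bv: vector_space "bscale :: bit \<Rightarrow> ('a \<Rightarrow> bit) \<Rightarrow> ('a \<Rightarrow> bit)"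
proof unfold_locales
  fix a b :: bit and x y :: "'a \<Rightarrow> bit"
  show "bscale a (x + y) = bscale a x + bscale a y" by (cases a) (auto simp: bscale_def)
  show "bscale (a + b) x = bscale a x + bscale b x" by (cases a; cases b) (auto simp: bscale_def fun_eq_iff)
  show "bscale a (bscale b x) = bscale (a * b) x" by (cases a; cases b) (auto simp: bscale_def)
  show "bscale 1 x = x" by (auto simp: bscale_def)
qed

lemma sum_fun_apply': "(sum f A) x = sum (\<lambda>a. f a x) A"
  by (induct A rule: infinite_finite_induct) auto

lemma bit_of_nat: "(of_nat n :: bit) = (if odd n then 1 else 0)"
  by (induct n) auto

lemma chi_inj: "chi A = chi B \<Longrightarrow> A = B"
  unfolding chi_def by (auto simp: fun_eq_iff split: if_splits)

lemma chi_empty[simp]: "chi {} = 0"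
  by (auto simp: chi_def fun_eq_iff)

lemma chi_eq_0_iff[simp]: "chi A = 0 \<longleftrightarrow> A = {}"
  by (auto simp: chi_def fun_eq_iff split: if_splits)

lemma chi_symdiff: "chi (symdiff A B) = chi A + chi B"
  by (auto simp: chi_def fun_eq_iff symdiff_def)

lemma chi_zsum: "finite I \<Longrightarrow> chi (zsum f I) = (\<Sum>i\<in>I. chi (f i))"
proof -
  assume fin: "finite I"
  have "(\<Sum>i\<in>I. chi (f i)) e = (if e \<in> zsum f I then 1 else 0)" for e
  proof -
    have "(\<Sum>i\<in>I. chi (f i)) e = (\<Sum>i\<in>I. if e \<in> f i then 1 else 0)"
      by (simp add: sum_fun_apply' chi_def)
    also have "\<dots> = of_nat (card {i\<in>I. e \<in> f i})"
      using fin by (simp add: sum.If_cases Int_def conj_commute)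
    finally show ?thesis by (simp add: bit_of_nat zsum_def)
  qed
  then show ?thesis by (auto simp: chi_def fun_eq_iff)
qed

lemma bit_add_self[simp]: "(a::bit) + a = 0"
  by (cases a) auto

lemma fun_add_self[simp]: "(f::'a \<Rightarrow> bit) + f = 0"
  by (auto simp: fun_eq_iff)


lemma sum_toggle:
  fixes h :: "'i \<Rightarrow> 'a \<Rightarrow> bit"
  assumes "finite J"
  shows "h i + sum h J = sum h (if i \<in> J then J - {i} else insert i J)"
proof (cases "i \<in> J")
  case True
  then have "sum h J = h i + sum h (J - {i})" using assms by (simp add: sum.remove)
  then have "h i + sum h J = (h i + h i) + sum h (J - {i})" by (simp only: add.assoc)
  also have "\<dots> = sum h (J - {i})" by (simp only: fun_add_self add_0_left)
  finally show ?thesis using True by simp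
next
  case False
  then show ?thesis using assms by simp
qed

lemma span_image_sums:
  fixes h :: "'i \<Rightarrow> 'a \<Rightarrow> bit"
  assumes "finite I"
  shows "bv.span (h ` I) = {sum h J | J. J \<subseteq> I}"
proof
  show "{sum h J | J. J \<subseteq> I} \<subseteq> bv.span (h ` I)"
  proof safe
    fix J assume "J \<subseteq> I"
    then show "sum h J \<in> bv.span (h ` I)"
      by (intro bv.span_sum) (auto intro: bv.span_base)
  qed
next
  show "bv.span (h ` I) \<subseteq> {sum h J | J. J \<subseteq> I}"
  proof
    fix x assume "x \<in> bv.span (h ` I)"
    then show "x \<in> {sum h J | J. J \<subseteq> I}"
    proof (induct rule: bv.span_induct_alt)
      case base
      then show ?case by (auto intro!: exI[of _ "{}"])
    next
      case (step c x y)
      then obtain i J where i: "i \<in> I" "x = h i" and J: "J \<subseteq> I" "y = sum h J" by auto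
      have fJ: "finite J" using J assms finite_subset by blast
      show ?case
      proof (cases "c = 1")
        case True
        have "bscale c x + y = sum h (if i \<in> J then J - {i} else insert i J)"
          using True i J sum_toggle[OF fJ, of h i] by (simp add: bscale_def)
        then show ?thesis using i J by (auto intro!: exI[of _ "if i \<in> J then J - {i} else insert i J"])
      next
        case False
        then have "c = 0" by simp
        then show ?thesis using J by (auto simp: bscale_def)
      qed
    qed
  qed
qed

lemma indep_bit:
  fixes S :: "('a \<Rightarrow> bit) set"
  assumes "finite S"
  shows "bv.independent S \<longleftrightarrow> (\<forall>T\<subseteq>S. T \<noteq> {} \<longrightarrow> sum id T \<noteq> 0)"
proof
  assume ind: "bv.independent S"
  show "\<forall>T\<subseteq>S. T \<noteq> {} \<longrightarrow> sum id T \<noteq> 0"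
  proof (intro allI impI notI)
    fix T assume T: "T \<subseteq> S" "T \<noteq> {}" "sum id T = 0"
    have fT: "finite T" using T assms finite_subset by blast
    have "(\<Sum>v\<in>T. bscale (1::bit) v) = 0" using T by (simp add: bscale_def)
    moreover have "\<forall>S'\<subseteq>S. finite S' \<longrightarrow> (\<forall>u. (\<Sum>v\<in>S'. bscale (u v) v) = 0 \<longrightarrow> (\<forall>v\<in>S'. u v = 0))"
      using ind unfolding bv.independent_explicit_finite_subsets .
    ultimately have "\<forall>v\<in>T. (\<lambda>_. 1::bit) v = 0"
      using fT T(1) by (elim allE[of _ T] impE allE[of _ "\<lambda>_. 1::bit"]) auto
    then show False using T by auto
  qed
next
  assume H: "\<forall>T\<subseteq>S. T \<noteq> {} \<longrightarrow> sum id T \<noteq> 0"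
  show "bv.independent S"
    unfolding bv.independent_explicit_finite_subsets
  proof (intro allI impI ballI)
    fix S' u v assume S': "S' \<subseteq> S" "finite S'" and s0: "(\<Sum>v\<in>S'. bscale (u v) v) = 0" and v: "v \<in> S'"
    let ?T = "{v\<in>S'. u v = 1}"
    have "(\<Sum>v\<in>S'. bscale (u v) v) = (\<Sum>v\<in>S'. if u v = 1 then v else 0)"
      by (simp add: bscale_def)
    also have "\<dots> = sum id ?T"
      using S' by (simp add: sum.If_cases Int_def conj_commute)
    finally have "sum id ?T = 0" using s0 by simp
    moreover have "?T \<subseteq> S" using S'(1) by auto
    ultimately have "\<not> (?T \<noteq> {})" using H[rule_format, of ?T] by blast
    then have "u v \<noteq> 1" using v by blast
    then show "u v = 0" by simp
  qed
qed


lemma zsum_image: "inj_on f I \<Longrightarrow> zsum f I = zsum id (f ` I)"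
proof -
  assume inj: "inj_on f I"
  have "card {i\<in>I. e \<in> f i} = card {y\<in>f ` I. e \<in> y}" for e
  proof -
    have "{y\<in>f ` I. e \<in> y} = f ` {i\<in>I. e \<in> f i}" by auto
    moreover have "inj_on f {i\<in>I. e \<in> f i}" using inj by (rule inj_on_subset) auto
    ultimately show ?thesis by (simp add: card_image)
  qed
  then show ?thesis unfolding zsum_def by simp
qed

lemma zsum_pair_eq: "i \<noteq> j \<Longrightarrow> f i = f j \<Longrightarrow> zsum f {i, j} = {}"
proof -
  assume ij: "i \<noteq> j" "f i = f j"
  have "card {k\<in>{i,j}. e \<in> f k} = (if e \<in> f i then 2 else 0)" for e
  proof (cases "e \<in> f i")
    case True
    then have "{k\<in>{i,j}. e \<in> f k} = {i,j}" using ij by auto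
    then show ?thesis using ij True by simp
  next
    case False
    then have "{k\<in>{i,j}. e \<in> f k} = {}" using ij by auto
    then show ?thesis using False by simp
  qed
  then show ?thesis unfolding zsum_def by auto
qed

lemma nth_image_sub: "I \<subseteq> {..<length xs} \<Longrightarrow> (!) xs ` I \<subseteq> set xs"
  by auto

lemma list_indep_iff:
  assumes P0: "{} \<in> P"
  shows "(\<forall>I\<subseteq>{..<length xs}. I \<noteq> {} \<longrightarrow> zsum ((!) xs) I \<notin> P) \<longleftrightarrow>
         distinct xs \<and> (\<forall>Y\<subseteq>set xs. Y \<noteq> {} \<longrightarrow> zsum id Y \<notin> P)"
proof
  assume H: "\<forall>I\<subseteq>{..<length xs}. I \<noteq> {} \<longrightarrow> zsum ((!) xs) I \<notin> P"
  have d: "distinct xs"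
    unfolding distinct_conv_nth
  proof (intro allI impI notI)
    fix i j assume ij: "i < length xs" "j < length xs" "i \<noteq> j" "xs ! i = xs ! j"
    have "zsum ((!) xs) {i, j} = {}" using zsum_pair_eq[of i j "(!) xs"] ij by simp
    moreover have "{i, j} \<subseteq> {..<length xs}" using ij by auto
    ultimately show False using H P0 by (metis insert_not_empty)
  qed
  moreover have "\<forall>Y\<subseteq>set xs. Y \<noteq> {} \<longrightarrow> zsum id Y \<notin> P"
  proof (intro allI impI)
    fix Y assume Y: "Y \<subseteq> set xs" "Y \<noteq> {}"
    define I where "I = {i. i < length xs \<and> xs ! i \<in> Y}"
    have IY: "(!) xs ` I = Y"
    proof
      show "(!) xs ` I \<subseteq> Y" unfolding I_def by auto
      show "Y \<subseteq> (!) xs ` I"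
      proof
        fix x assume "x \<in> Y"
        then have "x \<in> set xs" using Y(1) by blast
        then obtain i where "i < length xs" "xs ! i = x" by (auto simp: in_set_conv_nth)
        then show "x \<in> (!) xs ` I" using \<open>x \<in> Y\<close> unfolding I_def by auto
      qed
    qed
    have inj: "inj_on ((!) xs) I" using d unfolding I_def by (auto simp: inj_on_def nth_eq_iff_index_eq)
    have "I \<subseteq> {..<length xs}" "I \<noteq> {}" using IY Y unfolding I_def by auto
    then have "zsum ((!) xs) I \<notin> P" using H by blast
    then show "zsum id Y \<notin> P" using zsum_image[OF inj] IY by simp
  qed
  ultimately show "distinct xs \<and> (\<forall>Y\<subseteq>set xs. Y \<noteq> {} \<longrightarrow> zsum id Y \<notin> P)" by blast
next
  assume H: "distinct xs \<and> (\<forall>Y\<subseteq>set xs. Y \<noteq> {} \<longrightarrow> zsum id Y \<notin> P)"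
  show "\<forall>I\<subseteq>{..<length xs}. I \<noteq> {} \<longrightarrow> zsum ((!) xs) I \<notin> P"
  proof (intro allI impI)
    fix I assume I: "I \<subseteq> {..<length xs}" "I \<noteq> {}"
    have inj: "inj_on ((!) xs) I" using H I(1) by (intro inj_on_nth) auto
    have "(!) xs ` I \<subseteq> set xs" "(!) xs ` I \<noteq> {}" using I by auto
    then have "zsum id ((!) xs ` I) \<notin> P" using H by blast
    then show "zsum ((!) xs) I \<notin> P" using zsum_image[OF inj] by simp
  qed
qed

lemma list_span_iff:
  assumes d: "distinct xs"
  shows "(\<exists>I\<subseteq>{..<length xs}. R (zsum ((!) xs) I)) \<longleftrightarrow> (\<exists>Y\<subseteq>set xs. R (zsum id Y))"
proof
  assume "\<exists>I\<subseteq>{..<length xs}. R (zsum ((!) xs) I)"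
  then obtain I where I: "I \<subseteq> {..<length xs}" "R (zsum ((!) xs) I)" by blast
  have inj: "inj_on ((!) xs) I" using d I(1) by (intro inj_on_nth) auto
  show "\<exists>Y\<subseteq>set xs. R (zsum id Y)"
    using I zsum_image[OF inj] by (intro exI[of _ "(!) xs ` I"]) auto
next
  assume "\<exists>Y\<subseteq>set xs. R (zsum id Y)"
  then obtain Y where Y: "Y \<subseteq> set xs" "R (zsum id Y)" by blast
  define I where "I = {i. i < length xs \<and> xs ! i \<in> Y}"
  have IY: "(!) xs ` I = Y"
    proof
      show "(!) xs ` I \<subseteq> Y" unfolding I_def by auto
      show "Y \<subseteq> (!) xs ` I"
      proof
        fix x assume "x \<in> Y"
        then have "x \<in> set xs" using Y(1) by blast
        then obtain i where "i < length xs" "xs ! i = x" by (auto simp: in_set_conv_nth)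
        then show "x \<in> (!) xs ` I" using \<open>x \<in> Y\<close> unfolding I_def by auto
      qed
    qed
  have inj: "inj_on ((!) xs) I" using d unfolding I_def by (auto simp: inj_on_def nth_eq_iff_index_eq)
  have "I \<subseteq> {..<length xs}" unfolding I_def by auto
  then show "\<exists>I\<subseteq>{..<length xs}. R (zsum ((!) xs) I)"
    using Y(2) zsum_image[OF inj] IY by auto
qed

lemma chi_zsum_id: "finite Y \<Longrightarrow> chi (zsum id Y) = sum id (chi ` Y)"
proof -
  assume f: "finite Y"
  have "inj_on chi Y" by (meson chi_inj inj_onI)
  then show ?thesis using chi_zsum[OF f, of id] by (simp add: sum.reindex)
qed

lemma chi_mem_image: "chi a \<in> chi ` B \<longleftrightarrow> a \<in> B"
  using chi_inj by blast


lemma add_eq0_bit: "(a::'a \<Rightarrow> bit) + b = 0 \<Longrightarrow> a = b"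
proof -
  assume h: "a + b = 0"
  have "a = a + (b + b)" by simp
  also have "\<dots> = (a + b) + b" by (simp only: add.assoc)
  also have "\<dots> = b" using h by simp
  finally show ?thesis .
qed

lemma span_chi: "finite X \<Longrightarrow> bv.span (chi ` X) = {chi (zsum id Y) | Y. Y \<subseteq> X}"
proof -
  assume f: "finite X"
  have "bv.span (chi ` X) = {sum chi J | J. J \<subseteq> X}" by (rule span_image_sums[OF f])
  also have "\<dots> = {chi (zsum id Y) | Y. Y \<subseteq> X}"
  proof -
    have "sum chi J = chi (zsum id J)" if "J \<subseteq> X" for J
    proof -
      have "finite J" using that f finite_subset by blast
      then show ?thesis using chi_zsum[of J id] by simp
    qed
    then show ?thesis by (intro Collect_cong) metis
  qed
  finally show ?thesis .
qed

lemma span_id: "finite B \<Longrightarrow> bv.span B = {sum id J | J. J \<subseteq> B}"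
  using span_image_sums[of B id] by simp

lemma indep_chi_iff:
  assumes f: "finite X"
  shows "(\<forall>Y\<subseteq>X. Y \<noteq> {} \<longrightarrow> zsum id Y \<noteq> {}) \<longleftrightarrow> bv.independent (chi ` X)"
proof -
  have "bv.independent (chi ` X) \<longleftrightarrow> (\<forall>T\<subseteq>chi ` X. T \<noteq> {} \<longrightarrow> sum id T \<noteq> 0)"
    using f by (simp add: indep_bit)
  also have "\<dots> \<longleftrightarrow> (\<forall>Y\<subseteq>X. Y \<noteq> {} \<longrightarrow> zsum id Y \<noteq> {})"
  proof
    assume H: "\<forall>T\<subseteq>chi ` X. T \<noteq> {} \<longrightarrow> sum id T \<noteq> 0"
    show "\<forall>Y\<subseteq>X. Y \<noteq> {} \<longrightarrow> zsum id Y \<noteq> {}"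
    proof (intro allI impI)
      fix Y assume Y: "Y \<subseteq> X" "Y \<noteq> {}"
      have fY: "finite Y" using Y f finite_subset by blast
      have "chi ` Y \<subseteq> chi ` X" "chi ` Y \<noteq> {}" using Y by auto
      then have "sum id (chi ` Y) \<noteq> 0" using H by blast
      then show "zsum id Y \<noteq> {}" using chi_zsum_id[OF fY] by auto
    qed
  next
    assume H: "\<forall>Y\<subseteq>X. Y \<noteq> {} \<longrightarrow> zsum id Y \<noteq> {}"
    show "\<forall>T\<subseteq>chi ` X. T \<noteq> {} \<longrightarrow> sum id T \<noteq> 0"
    proof (intro allI impI)
      fix T assume T: "T \<subseteq> chi ` X" "T \<noteq> {}"
      then obtain Y where Y: "Y \<subseteq> X" "T = chi ` Y" by (auto simp: subset_image_iff)
      have fY: "finite Y" using Y f finite_subset by blast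
      have "Y \<noteq> {}" using T Y by auto
      then have "zsum id Y \<noteq> {}" using H Y by blast
      then show "sum id T \<noteq> 0" using chi_zsum_id[OF fY] Y by auto
    qed
  qed
  finally show ?thesis by simp
qed

lemma span_chi_iff:
  assumes f: "finite X"
  shows "(\<forall>z\<in>Z. \<exists>Y\<subseteq>X. zsum id Y = z) \<longleftrightarrow> chi ` Z \<subseteq> bv.span (chi ` X)"
proof
  assume "\<forall>z\<in>Z. \<exists>Y\<subseteq>X. zsum id Y = z"
  then show "chi ` Z \<subseteq> bv.span (chi ` X)" by (auto simp: span_chi[OF f])
next
  assume H: "chi ` Z \<subseteq> bv.span (chi ` X)"
  show "\<forall>z\<in>Z. \<exists>Y\<subseteq>X. zsum id Y = z"
  proof
    fix z assume "z \<in> Z"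
    then have "chi z \<in> bv.span (chi ` X)" using H by blast
    then obtain Y where "Y \<subseteq> X" "chi z = chi (zsum id Y)" by (auto simp: span_chi[OF f])
    then show "\<exists>Y\<subseteq>X. zsum id Y = z" using chi_inj by metis
  qed
qed

context
  fixes Bb :: "('a set \<Rightarrow> bit) set" and P :: "'a set set set"
  assumes fB: "finite Bb" and iB: "bv.independent Bb" and sB: "bv.span Bb = chi ` P"
begin

lemma hindep_iff:
  assumes f: "finite X"
  shows "(\<forall>Y\<subseteq>X. Y \<noteq> {} \<longrightarrow> zsum id Y \<notin> P) \<longleftrightarrow> bv.independent (chi ` X \<union> Bb) \<and> chi ` X \<inter> Bb = {}"
proof
  assume H: "\<forall>Y\<subseteq>X. Y \<noteq> {} \<longrightarrow> zsum id Y \<notin> P"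
  have D: "chi ` X \<inter> Bb = {}"
  proof (rule ccontr)
    assume "chi ` X \<inter> Bb \<noteq> {}"
    then obtain x where x: "x \<in> X" "chi x \<in> Bb" by auto
    have "chi x \<in> bv.span Bb" using x by (simp add: bv.span_base)
    then have "x \<in> P" using sB chi_mem_image by auto
    moreover have "zsum id {x} = x" using chi_zsum_id[of "{x}"] chi_inj by auto
    ultimately show False using H x by (metis empty_not_insert empty_subsetI insert_subset)
  qed
  have fU: "finite (chi ` X \<union> Bb)" using f fB by simp
  have I: "bv.independent (chi ` X \<union> Bb)"
    unfolding indep_bit[OF fU]
  proof (intro allI impI notI)
    fix T assume T: "T \<subseteq> chi ` X \<union> Bb" "T \<noteq> {}" "sum id T = 0"
    define T1 where "T1 = T \<inter> chi ` X"
    define T2 where "T2 = T \<inter> Bb"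
    have fT: "finite T1" "finite T2" unfolding T1_def T2_def using f fB by auto
    have "T = T1 \<union> T2" "T1 \<inter> T2 = {}" unfolding T1_def T2_def using T(1) D by auto
    then have "sum id T = sum id T1 + sum id T2" using fT by (simp add: sum.union_disjoint)
    then have eq: "sum id T1 = sum id T2" using T(3) add_eq0_bit by simp
    obtain Y where Y: "Y \<subseteq> X" "T1 = chi ` Y" unfolding T1_def by (auto simp: subset_image_iff)
    have fY: "finite Y" using Y f finite_subset by blast
    show False
    proof (cases "Y = {}")
      case True
      then have "T2 \<noteq> {}" "sum id T2 = 0" using eq Y \<open>T = T1 \<union> T2\<close> T(2) by auto
      moreover have "T2 \<subseteq> Bb" unfolding T2_def by auto
      ultimately show False using iB indep_bit[OF fB] by blast
    next
      case False
      have "sum id T2 \<in> bv.span Bb" by (intro bv.span_sum) (auto simp: T2_def intro: bv.span_base)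
      then have "chi (zsum id Y) \<in> chi ` P" using eq Y chi_zsum_id[OF fY] sB by simp
      then have "zsum id Y \<in> P" using chi_mem_image by blast
      then show False using H Y False by blast
    qed
  qed
  show "bv.independent (chi ` X \<union> Bb) \<and> chi ` X \<inter> Bb = {}" using I D by blast
next
  assume H: "bv.independent (chi ` X \<union> Bb) \<and> chi ` X \<inter> Bb = {}"
  have fU: "finite (chi ` X \<union> Bb)" using f fB by simp
  show "\<forall>Y\<subseteq>X. Y \<noteq> {} \<longrightarrow> zsum id Y \<notin> P"
  proof (intro allI impI notI)
    fix Y assume Y: "Y \<subseteq> X" "Y \<noteq> {}" "zsum id Y \<in> P"
    have fY: "finite Y" using Y f finite_subset by blast
    have "chi (zsum id Y) \<in> bv.span Bb" using Y(3) sB by simp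
    then obtain J where J: "J \<subseteq> Bb" "chi (zsum id Y) = sum id J" using span_id[OF fB] by auto
    have fJ: "finite J" using J fB finite_subset by blast
    let ?T = "chi ` Y \<union> J"
    have dj: "chi ` Y \<inter> J = {}" using H J Y by auto
    have "sum id ?T = sum id (chi ` Y) + sum id J" using fY fJ dj by (simp add: sum.union_disjoint)
    also have "\<dots> = 0" using J chi_zsum_id[OF fY] by simp
    finally have "sum id ?T = 0" .
    moreover have "?T \<subseteq> chi ` X \<union> Bb" "?T \<noteq> {}" using Y J by auto
    ultimately show False using H indep_bit[OF fU] by blast
  qed
qed

lemma hspan_iff:
  assumes f: "finite X"
  shows "(\<forall>z\<in>Z. \<exists>Y\<subseteq>X. symdiff z (zsum id Y) \<in> P) \<longleftrightarrow> chi ` Z \<subseteq> bv.span (chi ` X \<union> Bb)"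
proof
  assume H: "\<forall>z\<in>Z. \<exists>Y\<subseteq>X. symdiff z (zsum id Y) \<in> P"
  show "chi ` Z \<subseteq> bv.span (chi ` X \<union> Bb)"
  proof
    fix c assume "c \<in> chi ` Z"
    then obtain z where z: "z \<in> Z" "c = chi z" by auto
    then obtain Y where Y: "Y \<subseteq> X" "symdiff z (zsum id Y) \<in> P" using H by blast
    have a: "chi (zsum id Y) \<in> bv.span (chi ` X)" using Y span_chi[OF f] by auto
    have b: "chi (symdiff z (zsum id Y)) \<in> bv.span Bb" using Y sB by simp
    have "chi z = chi (zsum id Y) + chi (symdiff z (zsum id Y))"
    proof -
      have "chi (zsum id Y) + chi (symdiff z (zsum id Y)) = (chi (zsum id Y) + chi (zsum id Y)) + chi z"
        by (simp add: chi_symdiff add_ac)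
      then show ?thesis by simp
    qed
    then show "c \<in> bv.span (chi ` X \<union> Bb)" using a b z bv.span_Un by blast
  qed
next
  assume H: "chi ` Z \<subseteq> bv.span (chi ` X \<union> Bb)"
  show "\<forall>z\<in>Z. \<exists>Y\<subseteq>X. symdiff z (zsum id Y) \<in> P"
  proof
    fix z assume z: "z \<in> Z"
    then have "chi z \<in> bv.span (chi ` X \<union> Bb)" using H by blast
    then obtain a b where ab: "chi z = a + b" "a \<in> bv.span (chi ` X)" "b \<in> bv.span Bb"
      using bv.span_Un by blast
    obtain Y where Y: "Y \<subseteq> X" "a = chi (zsum id Y)" using ab(2) span_chi[OF f] by auto
    obtain \<beta> where bt: "\<beta> \<in> P" "b = chi \<beta>" using ab(3) sB by auto
    have "chi (symdiff z (zsum id Y)) = (a + a) + b" using ab Y by (simp add: chi_symdiff add_ac)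
    then have "chi (symdiff z (zsum id Y)) = chi \<beta>" using bt by simp
    then have "symdiff z (zsum id Y) = \<beta>" by (rule chi_inj)
    then show "\<exists>Y\<subseteq>X. symdiff z (zsum id Y) \<in> P" using Y bt by blast
  qed
qed

end


lemma fin_facts:
  assumes "simplicial_complex2 K"
  shows "finite (edges K)" "finite (cycles K)" "finite (triangles K)" "finite (boundaries K)"
proof -
  have fK: "finite K" using assms unfolding simplicial_complex2_def by blast
  show fe: "finite (edges K)" using fK unfolding edges_def by simp
  have "cycles K \<subseteq> Pow (edges K)" unfolding cycles_def by auto
  then show "finite (cycles K)" using fe finite_subset by blast
  show ft: "finite (triangles K)" using fK unfolding triangles_def by simp
  have "boundaries K = (\<lambda>T. zsum tri_boundary T) ` Pow (triangles K)" unfolding boundaries_def by auto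
  then show "finite (boundaries K)" using ft by simp
qed

lemma empty_bnd: "{} \<in> boundaries K"
  unfolding boundaries_def zsum_def by (auto intro!: exI[of _ "{}"])

lemma bnd_span:
  assumes "finite (triangles K)"
  shows "chi ` boundaries K = bv.span ((\<lambda>t. chi (tri_boundary t)) ` triangles K)"
proof -
  have "bv.span ((\<lambda>t. chi (tri_boundary t)) ` triangles K) = {sum (\<lambda>t. chi (tri_boundary t)) J | J. J \<subseteq> triangles K}"
    by (rule span_image_sums[OF assms])
  also have "\<dots> = chi ` boundaries K"
  proof -
    have "sum (\<lambda>t. chi (tri_boundary t)) J = chi (zsum tri_boundary J)" if "J \<subseteq> triangles K" for J
    proof -
      have "finite J" using that assms finite_subset by blast
      then show ?thesis using chi_zsum[of J tri_boundary] by simp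
    qed
    then have "{sum (\<lambda>t. chi (tri_boundary t)) J | J. J \<subseteq> triangles K} = {chi (zsum tri_boundary J) | J. J \<subseteq> triangles K}"
      by (intro Collect_cong) metis
    moreover have "chi ` boundaries K = {chi (zsum tri_boundary J) | J. J \<subseteq> triangles K}"
      unfolding boundaries_def by blast
    ultimately show ?thesis by simp
  qed
  finally show ?thesis by simp
qed

lemma bnd_basis:
  assumes "simplicial_complex2 K"
  obtains Bb :: "('v set \<Rightarrow> bit) set" where "finite Bb" "bv.independent Bb" "bv.span Bb = chi ` boundaries K"
proof -
  note ff = fin_facts[OF assms]
  let ?V = "chi ` boundaries K"
  obtain B where B: "B \<subseteq> ?V" "bv.independent B" "?V \<subseteq> bv.span B" "card B = bv.dim ?V"
    by (rule bv.basis_exists)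
  have sV: "bv.subspace ?V" unfolding bnd_span[OF ff(3)] by (rule bv.subspace_span)
  have "bv.span B \<subseteq> ?V" by (rule bv.span_minimal[OF B(1) sV])
  then have eq: "bv.span B = ?V" using B(3) by (rule subset_antisym)
  have fV: "finite ?V" using ff(4) by (rule finite_imageI)
  have fin: "finite B" using B(1) fV by (rule finite_subset)
  show ?thesis by (rule that[OF fin B(2) eq])
qed

lemma cycle_basis_iff:
  shows "cycle_basis K xs \<longleftrightarrow> set xs \<subseteq> cycles K \<and> distinct xs \<and> bv.independent (chi ` set xs)
           \<and> chi ` cycles K \<subseteq> bv.span (chi ` set xs)"
proof -
  have fs: "finite (set xs)" by simp
  have a: "(\<forall>I\<subseteq>{..<length xs}. I \<noteq> {} \<longrightarrow> zsum ((!) xs) I \<noteq> {}) \<longleftrightarrow>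
         distinct xs \<and> (\<forall>Y\<subseteq>set xs. Y \<noteq> {} \<longrightarrow> zsum id Y \<noteq> {})"
    using list_indep_iff[of "{{}}" xs] by simp
  have b: "(\<forall>z\<in>cycles K. \<exists>I\<subseteq>{..<length xs}. zsum ((!) xs) I = z) \<longleftrightarrow>
           (\<forall>z\<in>cycles K. \<exists>Y\<subseteq>set xs. zsum id Y = z)" if D: "distinct xs"
  proof -
    have "(\<exists>I\<subseteq>{..<length xs}. zsum ((!) xs) I = z) \<longleftrightarrow> (\<exists>Y\<subseteq>set xs. zsum id Y = z)" for z
      using list_span_iff[OF D, of "\<lambda>s. s = z"] .
    then show ?thesis by simp
  qed
  show ?thesis
  proof
    assume "cycle_basis K xs"
    then have S: "set xs \<subseteq> cycles K" and I: "\<forall>I\<subseteq>{..<length xs}. I \<noteq> {} \<longrightarrow> zsum ((!) xs) I \<noteq> {}"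
      and Sp: "\<forall>z\<in>cycles K. \<exists>I\<subseteq>{..<length xs}. zsum ((!) xs) I = z"
      unfolding cycle_basis_def by blast+
    from I a have D: "distinct xs" and Y: "\<forall>Y\<subseteq>set xs. Y \<noteq> {} \<longrightarrow> zsum id Y \<noteq> {}" by blast+
    have "bv.independent (chi ` set xs)" using Y by (rule indep_chi_iff[OF fs, THEN iffD1])
    moreover have "chi ` cycles K \<subseteq> bv.span (chi ` set xs)"
      using Sp[unfolded b[OF D]] by (rule span_chi_iff[OF fs, THEN iffD1])
    ultimately show "set xs \<subseteq> cycles K \<and> distinct xs \<and> bv.independent (chi ` set xs)
           \<and> chi ` cycles K \<subseteq> bv.span (chi ` set xs)" using S D by blast
  next
    assume H: "set xs \<subseteq> cycles K \<and> distinct xs \<and> bv.independent (chi ` set xs)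
           \<and> chi ` cycles K \<subseteq> bv.span (chi ` set xs)"
    then have D: "distinct xs" by blast
    have "\<forall>Y\<subseteq>set xs. Y \<noteq> {} \<longrightarrow> zsum id Y \<noteq> {}" using H[THEN conjunct2, THEN conjunct2, THEN conjunct1] by (rule indep_chi_iff[OF fs, THEN iffD2])
    then have I: "\<forall>I\<subseteq>{..<length xs}. I \<noteq> {} \<longrightarrow> zsum ((!) xs) I \<noteq> {}" using D by (simp only: a)
    have "\<forall>z\<in>cycles K. \<exists>Y\<subseteq>set xs. zsum id Y = z" using H[THEN conjunct2, THEN conjunct2, THEN conjunct2] by (rule span_chi_iff[OF fs, THEN iffD2])
    then have Sp: "\<forall>z\<in>cycles K. \<exists>I\<subseteq>{..<length xs}. zsum ((!) xs) I = z" by (simp only: b[OF D])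
    show "cycle_basis K xs" unfolding cycle_basis_def using H[THEN conjunct1] I Sp by (intro conjI)
  qed
qed

lemma homology_basis_iff:
  assumes B: "finite Bb" "bv.independent Bb" "bv.span Bb = chi ` boundaries K"
  shows "homology_basis K xs \<longleftrightarrow> set xs \<subseteq> cycles K \<and> distinct xs \<and>
           (bv.independent (chi ` set xs \<union> Bb) \<and> chi ` set xs \<inter> Bb = {})
           \<and> chi ` cycles K \<subseteq> bv.span (chi ` set xs \<union> Bb)"
proof -
  have fs: "finite (set xs)" by simp
  have a: "(\<forall>I\<subseteq>{..<length xs}. I \<noteq> {} \<longrightarrow> zsum ((!) xs) I \<notin> boundaries K) \<longleftrightarrow>
         distinct xs \<and> (\<forall>Y\<subseteq>set xs. Y \<noteq> {} \<longrightarrow> zsum id Y \<notin> boundaries K)"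
    by (rule list_indep_iff[OF empty_bnd])
  have b: "(\<forall>z\<in>cycles K. \<exists>I\<subseteq>{..<length xs}. symdiff z (zsum ((!) xs) I) \<in> boundaries K) \<longleftrightarrow>
           (\<forall>z\<in>cycles K. \<exists>Y\<subseteq>set xs. symdiff z (zsum id Y) \<in> boundaries K)" if D: "distinct xs"
  proof -
    have "(\<exists>I\<subseteq>{..<length xs}. symdiff z (zsum ((!) xs) I) \<in> boundaries K) \<longleftrightarrow>
       (\<exists>Y\<subseteq>set xs. symdiff z (zsum id Y) \<in> boundaries K)" for z
      using list_span_iff[OF D, of "\<lambda>s. symdiff z s \<in> boundaries K"] .
    then show ?thesis by simp
  qed
  note hi = hindep_iff[OF B fs]
  note hs = hspan_iff[OF B fs, of "cycles K"]
  show ?thesis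
  proof
    assume "homology_basis K xs"
    then have S: "set xs \<subseteq> cycles K" and I: "\<forall>I\<subseteq>{..<length xs}. I \<noteq> {} \<longrightarrow> zsum ((!) xs) I \<notin> boundaries K"
      and Sp: "\<forall>z\<in>cycles K. \<exists>I\<subseteq>{..<length xs}. symdiff z (zsum ((!) xs) I) \<in> boundaries K"
      unfolding homology_basis_def by blast+
    from I a have D: "distinct xs" and Y: "\<forall>Y\<subseteq>set xs. Y \<noteq> {} \<longrightarrow> zsum id Y \<notin> boundaries K" by blast+
    have c1: "bv.independent (chi ` set xs \<union> Bb) \<and> chi ` set xs \<inter> Bb = {}" using Y by (rule hi[THEN iffD1])
    have c2: "chi ` cycles K \<subseteq> bv.span (chi ` set xs \<union> Bb)" using Sp[unfolded b[OF D]] by (rule hs[THEN iffD1])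
    show "set xs \<subseteq> cycles K \<and> distinct xs \<and>
           (bv.independent (chi ` set xs \<union> Bb) \<and> chi ` set xs \<inter> Bb = {})
           \<and> chi ` cycles K \<subseteq> bv.span (chi ` set xs \<union> Bb)" using S D c1 c2 by (intro conjI) auto
  next
    assume H: "set xs \<subseteq> cycles K \<and> distinct xs \<and>
           (bv.independent (chi ` set xs \<union> Bb) \<and> chi ` set xs \<inter> Bb = {})
           \<and> chi ` cycles K \<subseteq> bv.span (chi ` set xs \<union> Bb)"
    then have D: "distinct xs" by blast
    have "\<forall>Y\<subseteq>set xs. Y \<noteq> {} \<longrightarrow> zsum id Y \<notin> boundaries K" using H[THEN conjunct2, THEN conjunct2, THEN conjunct1] by (rule hi[THEN iffD2])
    then have I: "\<forall>I\<subseteq>{..<length xs}. I \<noteq> {} \<longrightarrow> zsum ((!) xs) I \<notin> boundaries K" using D by (simp only: a)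
    have "\<forall>z\<in>cycles K. \<exists>Y\<subseteq>set xs. symdiff z (zsum id Y) \<in> boundaries K" using H[THEN conjunct2, THEN conjunct2, THEN conjunct2] by (rule hs[THEN iffD2])
    then have Sp: "\<forall>z\<in>cycles K. \<exists>I\<subseteq>{..<length xs}. symdiff z (zsum ((!) xs) I) \<in> boundaries K"
      by (simp only: b[OF D])
    show "homology_basis K xs" unfolding homology_basis_def using H[THEN conjunct1] I Sp by (intro conjI)
  qed
qed


lemma sum_list_update_real:
  "i < length xs \<Longrightarrow> sum_list (map (f :: 'a \<Rightarrow> real) (xs[i := x])) = sum_list (map f xs) - f (xs ! i) + f x"
proof (induct xs arbitrary: i)
  case Nil
  then show ?case by simp
next
  case (Cons y ys)
  then show ?case by (cases i) auto
qed

lemma sum_list_insort: "sum_list (map (f :: 'a \<Rightarrow> real) (insort_key k x xs)) = f x + sum_list (map f xs)"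
  by (induct xs) auto

lemma sum_list_sort: "sum_list (map (f :: 'a \<Rightarrow> real) (sort_key k xs)) = sum_list (map f xs)"
  by (induct xs) (auto simp: sum_list_insort)

lemma chi_sum_remove:
  assumes "finite Y" "y \<in> Y"
  shows "sum id (chi ` Y) = chi y + sum id (chi ` (Y - {y}))"
proof -
  have "sum id (chi ` Y) = chi (zsum id Y)" using chi_zsum_id[OF assms(1)] by simp
  also have "\<dots> = (\<Sum>x\<in>Y. chi x)" using chi_zsum[OF assms(1), of id] by simp
  also have "\<dots> = chi y + (\<Sum>x\<in>Y - {y}. chi x)" using assms by (simp add: sum.remove)
  also have "(\<Sum>x\<in>Y - {y}. chi x) = sum id (chi ` (Y - {y}))"
    using chi_zsum_id[of "Y - {y}"] chi_zsum[of "Y - {y}" id] assms(1) by simp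
  finally show ?thesis .
qed

lemma mcb_small:
  assumes mcb: "min_cycle_basis K w \<Gamma>" and z: "z \<in> cycles K"
    and Y: "Y \<subseteq> set \<Gamma>" "zsum id Y = z" and g: "\<gamma> \<in> Y"
  shows "csize w \<gamma> \<le> csize w z"
proof (rule ccontr)
  assume lt: "\<not> csize w \<gamma> \<le> csize w z"
  have cb: "cycle_basis K \<Gamma>" using mcb unfolding min_cycle_basis_def by blast
  then have cbi: "set \<Gamma> \<subseteq> cycles K \<and> distinct \<Gamma> \<and> bv.independent (chi ` set \<Gamma>)
           \<and> chi ` cycles K \<subseteq> bv.span (chi ` set \<Gamma>)" by (rule cycle_basis_iff[THEN iffD1])
  note S = cbi[THEN conjunct1] and D = cbi[THEN conjunct2, THEN conjunct1]
    and Ind = cbi[THEN conjunct2, THEN conjunct2, THEN conjunct1]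
    and Sp = cbi[THEN conjunct2, THEN conjunct2, THEN conjunct2]
  have gG: "\<gamma> \<in> set \<Gamma>" using Y(1) g by (rule subsetD)
  then obtain i where i: "i < length \<Gamma>" "\<Gamma> ! i = \<gamma>" by (auto simp: in_set_conv_nth)
  define R where "R = set \<Gamma> - {\<gamma>}"
  have fY: "finite Y" using Y(1) finite_subset by blast
  have YR: "Y - {\<gamma>} \<subseteq> R" using Y(1) unfolding R_def by blast
  have cz: "chi z = chi \<gamma> + sum id (chi ` (Y - {\<gamma>}))"
    using chi_sum_remove[OF fY g] chi_zsum_id[OF fY] Y(2) by simp
  have sY: "sum id (chi ` (Y - {\<gamma>})) \<in> bv.span (chi ` R)"
    using YR by (intro bv.span_sum) (auto intro: bv.span_base)
  have cg: "chi \<gamma> = chi z + sum id (chi ` (Y - {\<gamma>}))"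
  proof -
    have "chi z + sum id (chi ` (Y - {\<gamma>})) = chi \<gamma> + (sum id (chi ` (Y - {\<gamma>})) + sum id (chi ` (Y - {\<gamma>})))"
      using cz by (simp only: add.assoc)
    then show ?thesis by simp
  qed
  have ichi: "inj chi" by (meson chi_inj injI)
  have Rimg: "chi ` set \<Gamma> - {chi \<gamma>} = chi ` R" unfolding R_def by (simp add: image_set_diff[OF ichi])
  have nz: "chi z \<notin> bv.span (chi ` R)"
  proof
    assume "chi z \<in> bv.span (chi ` R)"
    then have "chi \<gamma> \<in> bv.span (chi ` R)" using cg sY bv.span_add by simp
    moreover have "chi \<gamma> \<in> chi ` set \<Gamma>" using gG by simp
    ultimately have "bv.dependent (chi ` set \<Gamma>)"
      unfolding bv.dependent_def using Rimg by (intro bexI[of _ "chi \<gamma>"]) auto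
    then show False using Ind by blast
  qed
  have IndR: "bv.independent (chi ` R)" using Ind by (rule bv.independent_mono) (auto simp: R_def)
  have Ind': "bv.independent (insert (chi z) (chi ` R))" by (rule bv.independent_insertI[OF nz IndR])
  define \<Gamma>' where "\<Gamma>' = \<Gamma>[i := z]"
  have set': "set \<Gamma>' = insert z R" unfolding \<Gamma>'_def R_def using set_update_distinct[OF D i(1)] i(2) by simp
  have "chi z \<notin> chi ` R" using nz bv.span_base by metis
  then have zR: "z \<notin> R" by blast
  have D': "distinct \<Gamma>'" unfolding \<Gamma>'_def
    by (rule distinct_list_update[OF D]) (use zR i(2) in \<open>simp add: R_def\<close>)
  have zc: "z \<in> cycles K" by (rule z)
  have S': "set \<Gamma>' \<subseteq> cycles K" unfolding set' R_def using S zc by auto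
  have img': "chi ` set \<Gamma>' = insert (chi z) (chi ` R)" using set' by simp
  have spR: "bv.span (chi ` R) \<subseteq> bv.span (chi ` set \<Gamma>')"
    by (rule bv.span_mono) (simp add: img' subset_insertI)
  have "chi ` set \<Gamma> \<subseteq> bv.span (chi ` set \<Gamma>')"
  proof
    fix c assume "c \<in> chi ` set \<Gamma>"
    then obtain x where x: "x \<in> set \<Gamma>" "c = chi x" by blast
    show "c \<in> bv.span (chi ` set \<Gamma>')"
    proof (cases "x = \<gamma>")
      case True
      have "chi z \<in> bv.span (chi ` set \<Gamma>')" unfolding img' by (rule bv.span_base) simp
      moreover have "sum id (chi ` (Y - {\<gamma>})) \<in> bv.span (chi ` set \<Gamma>')"
        using sY spR by (rule subsetD[rotated])
      ultimately have "chi z + sum id (chi ` (Y - {\<gamma>})) \<in> bv.span (chi ` set \<Gamma>')" by (rule bv.span_add)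
      then show ?thesis using True x cg by simp
    next
      case False
      then have "x \<in> R" using x unfolding R_def by blast
      then have "chi x \<in> chi ` set \<Gamma>'" unfolding img' by simp
      then show ?thesis using x by (simp add: bv.span_base)
    qed
  qed
  then have "bv.span (chi ` set \<Gamma>) \<subseteq> bv.span (chi ` set \<Gamma>')"
    by (rule bv.span_minimal[OF _ bv.subspace_span])
  then have Sp': "chi ` cycles K \<subseteq> bv.span (chi ` set \<Gamma>')" using Sp by (rule subset_trans[rotated])
  have Ind'': "bv.independent (chi ` set \<Gamma>')" using Ind' img' by simp
  have cb': "cycle_basis K \<Gamma>'" using S' D' Ind'' Sp' by (intro cycle_basis_iff[THEN iffD2] conjI)
  then have "(\<Sum>C\<leftarrow>\<Gamma>. csize w C) \<le> (\<Sum>C\<leftarrow>\<Gamma>'. csize w C)" using mcb unfolding min_cycle_basis_def by blast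
  moreover have "(\<Sum>C\<leftarrow>\<Gamma>'. csize w C) = (\<Sum>C\<leftarrow>\<Gamma>. csize w C) - csize w \<gamma> + csize w z"
    unfolding \<Gamma>'_def using sum_list_update_real[OF i(1), of "csize w" z] i(2) by simp
  ultimately show False using lt by simp
qed

lemma cyc_in_spanG:
  assumes mcb: "min_cycle_basis K w \<Gamma>"
    and dec: "\<forall>i<length \<Gamma>. \<exists>\<Gamma>i. \<Gamma>i \<subseteq> G' \<and> finite \<Gamma>i \<and> \<Gamma> ! i = zsum id \<Gamma>i \<and>
               (\<forall>\<gamma>\<in>\<Gamma>i. csize w \<gamma> \<le> 2 * csize w (\<Gamma> ! i))"
    and z: "z \<in> cycles K"
  shows "chi z \<in> bv.span (chi ` {a\<in>G'. csize w a \<le> 2 * csize w z})"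
proof -
  let ?G = "{a\<in>G'. csize w a \<le> 2 * csize w z}"
  have cb: "cycle_basis K \<Gamma>" using mcb unfolding min_cycle_basis_def by blast
  then have cbi: "set \<Gamma> \<subseteq> cycles K \<and> distinct \<Gamma> \<and> bv.independent (chi ` set \<Gamma>)
           \<and> chi ` cycles K \<subseteq> bv.span (chi ` set \<Gamma>)" by (rule cycle_basis_iff[THEN iffD1])
  note Sp = cbi[THEN conjunct2, THEN conjunct2, THEN conjunct2]
  have "chi z \<in> bv.span (chi ` set \<Gamma>)" using Sp z by blast
  then have "chi z \<in> {chi (zsum id Y) | Y. Y \<subseteq> set \<Gamma>}" by (simp only: span_chi[OF finite_set])
  then obtain Y where Y: "Y \<subseteq> set \<Gamma>" "chi z = chi (zsum id Y)" by blast
  have zY: "zsum id Y = z" using Y(2) by (rule chi_inj[symmetric])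
  have fY: "finite Y" using Y(1) finite_subset by blast
  have "sum id (chi ` Y) \<in> bv.span (chi ` ?G)"
  proof (rule bv.span_sum)
    fix c assume "c \<in> chi ` Y"
    then obtain \<gamma> where g: "\<gamma> \<in> Y" "c = chi \<gamma>" by blast
    have le: "csize w \<gamma> \<le> csize w z" by (rule mcb_small[OF mcb z Y(1) zY g(1)])
    have "\<gamma> \<in> set \<Gamma>" using g(1) Y(1) by blast
    then obtain i where i: "i < length \<Gamma>" "\<Gamma> ! i = \<gamma>" by (auto simp: in_set_conv_nth)
    then obtain \<Gamma>i where Gi: "\<Gamma>i \<subseteq> G'" "finite \<Gamma>i" "\<gamma> = zsum id \<Gamma>i"
      "\<forall>a\<in>\<Gamma>i. csize w a \<le> 2 * csize w \<gamma>" using dec[rule_format, OF i(1)] i(2) by auto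
    have "chi \<gamma> = sum id (chi ` \<Gamma>i)" using Gi(3) chi_zsum_id[OF Gi(2)] by simp
    moreover have "sum id (chi ` \<Gamma>i) \<in> bv.span (chi ` ?G)"
    proof (rule bv.span_sum)
      fix d assume "d \<in> chi ` \<Gamma>i"
      then obtain a where a: "a \<in> \<Gamma>i" "d = chi a" by blast
      have "csize w a \<le> 2 * csize w \<gamma>" using Gi(4) a(1) by blast
      then have "csize w a \<le> 2 * csize w z" using le by linarith
      then have "a \<in> ?G" using a(1) Gi(1) by blast
      then show "id d \<in> bv.span (chi ` ?G)" using a(2) by (simp add: bv.span_base)
    qed
    ultimately show "id c \<in> bv.span (chi ` ?G)" using g(2) by simp
  qed
  then show ?thesis using Y(2) chi_zsum_id[OF fY] by simp
qed


lemma inj_chi: "inj chi" by (meson chi_inj injI)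

lemma card_chiU:
  assumes "distinct xs" "chi ` set xs \<inter> Bb = {}" "finite Bb"
  shows "card (chi ` set xs \<union> Bb) = length xs + card Bb"
proof -
  have "card (chi ` set xs) = card (set xs)" by (rule card_image[OF inj_on_subset[OF inj_chi]]) simp
  also have "\<dots> = length xs" using assms(1) by (rule distinct_card)
  finally have "card (chi ` set xs) = length xs" .
  moreover have "card (chi ` set xs \<union> Bb) = card (chi ` set xs) + card Bb"
    using assms(2,3) by (intro card_Un_disjoint) auto
  ultimately show ?thesis by simp
qed

lemma span_equal_card:
  assumes fs: "finite s" and ft: "finite t" and i: "bv.independent s" and st: "s \<subseteq> bv.span t"
    and c: "card s = card t"
  shows "t \<subseteq> bv.span s"
proof
  fix x assume xt: "x \<in> t"
  show "x \<in> bv.span s"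
  proof (rule ccontr)
    assume nx: "x \<notin> bv.span s"
    have i2: "bv.independent (insert x s)" by (rule bv.independent_insertI[OF nx i])
    have "x \<in> bv.span t" using xt by (rule bv.span_base)
    then have "insert x s \<subseteq> bv.span t" using st by blast
    then have "card (insert x s) \<le> card t" using bv.independent_span_bound[OF ft i2] by blast
    moreover have "x \<notin> s" using nx bv.span_base by blast
    ultimately show False using fs c by simp
  qed
qed

lemma hb_exists:
  assumes fB: "finite Bb" and iB: "bv.independent Bb" and sB: "bv.span Bb = chi ` boundaries K"
    and fc: "finite (cycles K)"
  shows "\<exists>xs. homology_basis K xs"
proof -
  obtain B' where B': "Bb \<subseteq> B'" "B' \<subseteq> chi ` cycles K \<union> Bb" "bv.independent B'" "chi ` cycles K \<union> Bb \<subseteq> bv.span B'"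
    by (rule bv.maximal_independent_subset_extend[of Bb "chi ` cycles K \<union> Bb"]) (use iB in auto)
  define X where "X = {x\<in>cycles K. chi x \<in> B' - Bb}"
  have fX: "finite X" using fc unfolding X_def by simp
  have cX: "chi ` X = B' - Bb"
  proof
    show "chi ` X \<subseteq> B' - Bb" unfolding X_def by auto
    show "B' - Bb \<subseteq> chi ` X"
    proof
      fix b assume b: "b \<in> B' - Bb"
      then have "b \<in> chi ` cycles K" using B'(2) by blast
      then obtain x where "x \<in> cycles K" "b = chi x" by blast
      then show "b \<in> chi ` X" using b unfolding X_def by blast
    qed
  qed
  obtain xs where xs: "set xs = X" "distinct xs" using finite_distinct_list[OF fX] by blast
  have U: "chi ` set xs \<union> Bb = B'" using cX xs(1) B'(1) by blast
  have "set xs \<subseteq> cycles K" using xs(1) unfolding X_def by blast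
  moreover have "chi ` set xs \<inter> Bb = {}" using cX xs(1) by blast
  moreover have "chi ` cycles K \<subseteq> bv.span (chi ` set xs \<union> Bb)" using U B'(4) by blast
  ultimately have "homology_basis K xs"
    using xs(2) B'(3) U by (intro homology_basis_iff[OF fB iB sB, THEN iffD2]) simp
  then show ?thesis by blast
qed

lemma min_hb_exists:
  assumes fB: "finite Bb" and iB: "bv.independent Bb" and sB: "bv.span Bb = chi ` boundaries K"
    and fc: "finite (cycles K)"
  obtains Cs where "min_homology_basis K w Cs" "sorted (map (csize w) Cs)"
proof -
  let ?H = "{xs. homology_basis K xs}"
  let ?f = "\<lambda>xs. (\<Sum>C\<leftarrow>xs. csize w C)"
  have "?H \<subseteq> {xs. set xs \<subseteq> cycles K \<and> length xs \<le> card (cycles K)}"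
  proof
    fix xs assume "xs \<in> ?H"
    then have hb: "set xs \<subseteq> cycles K \<and> distinct xs \<and>
           (bv.independent (chi ` set xs \<union> Bb) \<and> chi ` set xs \<inter> Bb = {})
           \<and> chi ` cycles K \<subseteq> bv.span (chi ` set xs \<union> Bb)"
      using homology_basis_iff[OF fB iB sB] by blast
    then have "length xs = card (set xs)" by (simp add: distinct_card)
    also have "\<dots> \<le> card (cycles K)" using hb fc by (intro card_mono) auto
    finally show "xs \<in> {xs. set xs \<subseteq> cycles K \<and> length xs \<le> card (cycles K)}" using hb by blast
  qed
  then have fH: "finite ?H" using finite_lists_length_le[OF fc] finite_subset by blast
  obtain x0 where x0: "homology_basis K x0" using hb_exists[OF fB iB sB fc] by blast
  then have ne: "?H \<noteq> {}" by blast
  have "Min (?f ` ?H) \<in> ?f ` ?H" using fH ne by (intro Min_in) auto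
  then obtain C0 where C0: "homology_basis K C0" "?f C0 = Min (?f ` ?H)" by auto
  have minC0: "?f C0 \<le> ?f y" if "homology_basis K y" for y
    using C0(2) fH that by (simp add: Min_le)
  define Cs where "Cs = sort_key (csize w) C0"
  have hb0: "set C0 \<subseteq> cycles K \<and> distinct C0 \<and>
           (bv.independent (chi ` set C0 \<union> Bb) \<and> chi ` set C0 \<inter> Bb = {})
           \<and> chi ` cycles K \<subseteq> bv.span (chi ` set C0 \<union> Bb)"
    using homology_basis_iff[OF fB iB sB] C0(1) by blast
  have "homology_basis K Cs"
    using hb0 unfolding Cs_def by (intro homology_basis_iff[OF fB iB sB, THEN iffD2]) simp
  moreover have "?f Cs = ?f C0" unfolding Cs_def by (rule sum_list_sort)
  ultimately have "min_homology_basis K w Cs"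
    unfolding min_homology_basis_def using minC0 by simp
  moreover have "sorted (map (csize w) Cs)" unfolding Cs_def by simp
  ultimately show ?thesis by (rule that)
qed


lemma greedy:
  assumes fB: "finite Bb" and iB: "bv.independent Bb"
    and Cc: "set Cs \<subseteq> cycles K" and Cd: "distinct Cs"
    and Ci: "bv.independent (chi ` set Cs \<union> Bb)" and Cj: "chi ` set Cs \<inter> Bb = {}"
    and srt: "sorted (map (csize w) Cs)"
    and spanG: "\<forall>z\<in>cycles K. chi z \<in> bv.span (chi ` {a\<in>G'. csize w a \<le> 2 * csize w z})"
  shows "k \<le> length Cs \<Longrightarrow> \<exists>As. length As = k \<and> set As \<subseteq> G' \<and> distinct As \<and>
           bv.independent (chi ` set As \<union> Bb) \<and> chi ` set As \<inter> Bb = {} \<and>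
           (\<forall>j<k. csize w (As ! j) \<le> 2 * csize w (Cs ! j))"
proof (induct k)
  case 0
  show ?case using iB by (intro exI[of _ "[]"]) simp
next
  case (Suc k)
  then have kl: "k < length Cs" by simp
  then obtain As where As: "length As = k" "set As \<subseteq> G'" "distinct As"
    "bv.independent (chi ` set As \<union> Bb)" "chi ` set As \<inter> Bb = {}"
    "\<forall>j<k. csize w (As ! j) \<le> 2 * csize w (Cs ! j)" using Suc(1) by auto
  define S where "S = chi ` set As \<union> Bb"
  have fS: "finite S" unfolding S_def using fB by simp
  have cS: "card S = k + card Bb" unfolding S_def using card_chiU[OF As(3) As(5) fB] As(1) by simp
  define Gk where "Gk = {a\<in>G'. csize w a \<le> 2 * csize w (Cs ! k)}"
  have ex: "\<exists>a\<in>Gk. chi a \<notin> bv.span S"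
  proof (rule ccontr)
    assume "\<not> (\<exists>a\<in>Gk. chi a \<notin> bv.span S)"
    then have "chi ` Gk \<subseteq> bv.span S" by blast
    then have spG: "bv.span (chi ` Gk) \<subseteq> bv.span S" by (rule bv.span_minimal[OF _ bv.subspace_span])
    define T where "T = chi ` set (take (Suc k) Cs) \<union> Bb"
    have "chi ` set (take (Suc k) Cs) \<subseteq> bv.span S"
    proof
      fix c assume "c \<in> chi ` set (take (Suc k) Cs)"
      then obtain x where x: "x \<in> set (take (Suc k) Cs)" "c = chi x" by blast
      then obtain j where j: "j < length (take (Suc k) Cs)" "take (Suc k) Cs ! j = x" by (auto simp: in_set_conv_nth)
      have jk: "j \<le> k" using j(1) by simp
      have xj: "x = Cs ! j" using j kl by simp
      have xc: "x \<in> cycles K" using xj jk kl Cc by (metis le_less_trans nth_mem subsetD)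
      have "map (csize w) Cs ! j \<le> map (csize w) Cs ! k" using srt jk kl by (intro sorted_nth_mono) auto
      then have "csize w x \<le> csize w (Cs ! k)" using xj jk kl by simp
      then have "{a\<in>G'. csize w a \<le> 2 * csize w x} \<subseteq> Gk" unfolding Gk_def by auto
      then have "bv.span (chi ` {a\<in>G'. csize w a \<le> 2 * csize w x}) \<subseteq> bv.span (chi ` Gk)"
        by (intro bv.span_mono image_mono)
      moreover have "chi x \<in> bv.span (chi ` {a\<in>G'. csize w a \<le> 2 * csize w x})" using spanG xc by blast
      ultimately show "c \<in> bv.span S" using spG x(2) by blast
    qed
    moreover have "Bb \<subseteq> bv.span S" unfolding S_def by (auto intro: bv.span_base)
    ultimately have TS: "T \<subseteq> bv.span S" unfolding T_def by blast
    have tsub: "set (take (Suc k) Cs) \<subseteq> set Cs" by (rule set_take_subset)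
    have iT: "bv.independent T" unfolding T_def using Ci by (rule bv.independent_mono) (use tsub in blast)
    have "chi ` set (take (Suc k) Cs) \<inter> Bb = {}" using Cj tsub by blast
    then have cT: "card T = Suc k + card Bb" unfolding T_def
      using card_chiU[of "take (Suc k) Cs" Bb] Cd fB kl by simp
    have "card T \<le> card S" using bv.independent_span_bound[OF fS iT TS] by blast
    then show False using cS cT by simp
  qed
  then obtain a where a: "a \<in> Gk" "chi a \<notin> bv.span S" by blast
  define As' where "As' = As @ [a]"
  have aS: "chi a \<notin> S" using a(2) bv.span_base by blast
  then have aAs: "a \<notin> set As" unfolding S_def by blast
  have "chi ` set As' \<union> Bb = insert (chi a) S" unfolding As'_def S_def by auto
  then have i': "bv.independent (chi ` set As' \<union> Bb)" using bv.independent_insertI[OF a(2)] As(4) S_def by simp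
  have j': "chi ` set As' \<inter> Bb = {}" unfolding As'_def using As(5) aS S_def by auto
  have b': "\<forall>j<Suc k. csize w (As' ! j) \<le> 2 * csize w (Cs ! j)"
  proof (intro allI impI)
    fix j assume "j < Suc k"
    then consider "j < k" | "j = k" by linarith
    then show "csize w (As' ! j) \<le> 2 * csize w (Cs ! j)"
    proof cases
      case 1
      then show ?thesis using As(1) As(6) unfolding As'_def by (simp add: nth_append)
    next
      case 2
      have "As' ! k = a" unfolding As'_def using As(1) nth_append_length[of As a] by simp
      then show ?thesis using 2 a(1) unfolding Gk_def by simp
    qed
  qed
  have "length As' = Suc k" "set As' \<subseteq> G'" "distinct As'"
    using As a(1) aAs unfolding As'_def Gk_def by auto
  then show ?case using i' j' b' by blast
qed


theorem lemma1:
  fixes K :: "'v set set" and w :: "'v set \<Rightarrow> real" and G' :: "'v set set set"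
  assumes "simplicial_complex2 K"
    and "\<forall>e\<in>edges K. 0 \<le> w e"
    and "G' \<subseteq> cycles K"
    and "\<exists>\<Gamma>. min_cycle_basis K w \<Gamma> \<and>
           (\<forall>i<length \<Gamma>. \<exists>\<Gamma>i. \<Gamma>i \<subseteq> G' \<and> finite \<Gamma>i \<and> \<Gamma> ! i = zsum id \<Gamma>i \<and>
               (\<forall>\<gamma>\<in>\<Gamma>i. csize w \<gamma> \<le> 2 * csize w (\<Gamma> ! i)))"
  shows "\<exists>Cs. min_homology_basis K w Cs \<and>
           (\<exists>As. length As = length Cs \<and> set As \<subseteq> G' \<and> homology_basis K As \<and>
              (\<forall>i<length Cs. csize w (As ! i) \<le> 2 * csize w (Cs ! i)))"
proof -
  note sc = assms(1) and GC = assms(3)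
  obtain \<Gamma> where mcb: "min_cycle_basis K w \<Gamma>" and dec: "\<forall>i<length \<Gamma>. \<exists>\<Gamma>i. \<Gamma>i \<subseteq> G' \<and> finite \<Gamma>i \<and> \<Gamma> ! i = zsum id \<Gamma>i \<and>
               (\<forall>\<gamma>\<in>\<Gamma>i. csize w \<gamma> \<le> 2 * csize w (\<Gamma> ! i))" using assms(4) by blast
  note ff = fin_facts[OF sc]
  obtain Bb :: "('v set \<Rightarrow> bit) set" where fB: "finite Bb" and iB: "bv.independent Bb"
    and sB: "bv.span Bb = chi ` boundaries K" by (rule bnd_basis[OF sc])
  obtain Cs where mhb: "min_homology_basis K w Cs" and srt: "sorted (map (csize w) Cs)"
    by (rule min_hb_exists[OF fB iB sB ff(2)])
  have "homology_basis K Cs" using mhb unfolding min_homology_basis_def by blast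
  then have hbC: "set Cs \<subseteq> cycles K \<and> distinct Cs \<and>
           (bv.independent (chi ` set Cs \<union> Bb) \<and> chi ` set Cs \<inter> Bb = {})
           \<and> chi ` cycles K \<subseteq> bv.span (chi ` set Cs \<union> Bb)"
    by (rule homology_basis_iff[OF fB iB sB, THEN iffD1])
  then have Cc: "set Cs \<subseteq> cycles K" and Cd: "distinct Cs" and Ci: "bv.independent (chi ` set Cs \<union> Bb)"
    and Cj: "chi ` set Cs \<inter> Bb = {}" and Csp: "chi ` cycles K \<subseteq> bv.span (chi ` set Cs \<union> Bb)"
    by blast+
  have spanG: "\<forall>z\<in>cycles K. chi z \<in> bv.span (chi ` {a\<in>G'. csize w a \<le> 2 * csize w z})"
    using cyc_in_spanG[OF mcb dec] by blast
  obtain As where As: "length As = length Cs" "set As \<subseteq> G'" "distinct As"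
    "bv.independent (chi ` set As \<union> Bb)" "chi ` set As \<inter> Bb = {}"
    "\<forall>j<length Cs. csize w (As ! j) \<le> 2 * csize w (Cs ! j)"
    using greedy[OF fB iB Cc Cd Ci Cj srt spanG, of "length Cs"] by blast
  define s where "s = chi ` set As \<union> Bb"
  define t where "t = chi ` set Cs \<union> Bb"
  have fs: "finite s" "finite t" unfolding s_def t_def using fB by simp_all
  have cst: "card s = card t" unfolding s_def t_def
    using card_chiU[OF As(3) As(5) fB] card_chiU[OF Cd Cj fB] As(1) by simp
  have Ac: "set As \<subseteq> cycles K" using As(2) GC by blast
  have "chi ` set As \<subseteq> bv.span t" using Ac Csp unfolding t_def by blast
  moreover have "Bb \<subseteq> bv.span t" unfolding t_def by (auto intro: bv.span_base)
  ultimately have st: "s \<subseteq> bv.span t" unfolding s_def by blast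
  have iS: "bv.independent s" unfolding s_def by (rule As(4))
  have "t \<subseteq> bv.span s" by (rule span_equal_card[OF fs iS st cst])
  then have "bv.span t \<subseteq> bv.span s" by (rule bv.span_minimal[OF _ bv.subspace_span])
  then have Asp: "chi ` cycles K \<subseteq> bv.span (chi ` set As \<union> Bb)" using Csp unfolding s_def t_def by blast
  have "homology_basis K As"
    using Ac As(3) As(4) As(5) Asp by (intro homology_basis_iff[OF fB iB sB, THEN iffD2] conjI)
  then show ?thesis using mhb As(1) As(2) As(6) by blast
qed

end
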